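(* In the setting of the context, assume $V_h^\pi(s)\ge\frac34(H-h+1)$ for $s\in\overline{\mathcal S}$ and $V_h^\pi(s)\le\frac14(H-h+1)$ for $s\in\underline{\mathcal S}$ (all $h=1,\dots,H$), that $\phi(s,a)^\top\mathbf x\ge0$ for all $(s,a)\in\mathcal X$, and that $\widetilde p$ is a transition kernel. Let $\widetilde\nu_h^\pi:=\widetilde{\mathbb E}^\pi[\phi(s_h,a_h)\mid s_0\sim\xi_0]$ for $h=0,\dots,H-1$, where $\widetilde{\mathbb E}^\pi$ is expectation along target-policy trajectories under $\widetilde p$, and let $\widetilde v^\pi$ be the value of $\pi$ under $(\widetilde p,r)$. Then $$v^\pi-\widetilde v^\pi\ge\frac12\bar p\underline p\Big(\sum_{h=0}^{H-1}(H-h)\widetilde\nu_h^\pi\Big)^\top\mathbf x.$$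
   Context: MDP $(p,r)$ with $\mathcal X=\mathcal S\times\mathcal A$, mean reward $r$, target policy $\pi$, horizon $H$, initial distribution $\xi_0$; $v^\pi=\mathbb E^\pi[\sum_{h=0}^Hr(s_h,a_h)\mid s_0\sim\xi_0]$, $Q_h^\pi(s,a)=\mathbb E^\pi[\sum_{h'=h}^Hr(s_{h'},a_{h'})\mid s_h=s,a_h=a]$, $V_h^\pi(s)=\int Q_h^\pi(s,a)\pi(a\mid s)da$. $\phi:\mathcal X\to\mathbb R^d$, $\bar\pi$ a deterministic behavior policy, $\overline{\mathcal S},\underline{\mathcal S}\subseteq\mathcal S$ disjoint, $\bar p:=\int_{\overline{\mathcal S}}\min_{s\in\mathcal S}p(s'\mid s,\bar\pi(s))ds'$, $\underline p:=\int_{\underline{\mathcal S}}\min_{s\in\mathcal S}p(s'\mid s,\bar\pi(s))ds'$. For $\mathbf x\in\mathbb R^d$, $\Delta q(s'):=\mathbf x\cdot\min_{s\in\mathcal S}p(s'\mid s,\bar\pi(s))\cdot(\underline p\,\mathbb 1_{\overline{\mathcal S}}(s')-\bar p\,\mathbb 1_{\underline{\mathcal S}}(s'))$ and $\widetilde p(s'\mid s,a):=p(s'\mid s,a)-\phi(s,a)^\top\Delta q(s')$. *)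

theory Defs
  imports "HOL-Analysis.Analysis"
begin

text \<open>Transition kernels and policies are given by densities w.r.t. reference
  measures: M on states (ds') and A on actions (da).
  Convention: p s a s' = p(s' | s, a), pol s a = pi(a | s).\<close>

text \<open>Value with k remaining steps: Vrem k = V_{H+1-k}; Vrem 0 = 0 (= V_{H+1}).\<close>
fun Vrem :: "'s measure \<Rightarrow> 'a measure \<Rightarrow> ('s \<Rightarrow> 'a \<Rightarrow> 's \<Rightarrow> real) \<Rightarrow> ('s \<Rightarrow> 'a \<Rightarrow> real)
    \<Rightarrow> ('s \<Rightarrow> 'a \<Rightarrow> real) \<Rightarrow> nat \<Rightarrow> 's \<Rightarrow> real" where
  "Vrem M A p r pol 0 s = 0"
| "Vrem M A p r pol (Suc k) s =
     (\<integral>a. pol s a * (r s a + (\<integral>s'. p s a s' * Vrem M A p r pol k s' \<partial>M)) \<partial>A)"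

definition Vfun :: "'s measure \<Rightarrow> 'a measure \<Rightarrow> ('s \<Rightarrow> 'a \<Rightarrow> 's \<Rightarrow> real) \<Rightarrow> ('s \<Rightarrow> 'a \<Rightarrow> real)
    \<Rightarrow> ('s \<Rightarrow> 'a \<Rightarrow> real) \<Rightarrow> nat \<Rightarrow> nat \<Rightarrow> 's \<Rightarrow> real" where
  "Vfun M A p r pol H h s = Vrem M A p r pol (Suc H - h) s"

text \<open>v^pi = E[sum_{h=0}^H r(s_h,a_h) | s_0 ~ xi0] (xi0 a density w.r.t. M).\<close>
definition pol_value :: "'s measure \<Rightarrow> 'a measure \<Rightarrow> ('s \<Rightarrow> 'a \<Rightarrow> 's \<Rightarrow> real) \<Rightarrow> ('s \<Rightarrow> 'a \<Rightarrow> real)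
    \<Rightarrow> ('s \<Rightarrow> 'a \<Rightarrow> real) \<Rightarrow> ('s \<Rightarrow> real) \<Rightarrow> nat \<Rightarrow> real" where
  "pol_value M A p r pol xi0 H = (\<integral>s. xi0 s * Vfun M A p r pol H 0 s \<partial>M)"

text \<open>Density of s_h along trajectories of pol under kernel p, s_0 ~ xi0.\<close>
fun sdist :: "'s measure \<Rightarrow> 'a measure \<Rightarrow> ('s \<Rightarrow> 'a \<Rightarrow> 's \<Rightarrow> real) \<Rightarrow> ('s \<Rightarrow> 'a \<Rightarrow> real)
    \<Rightarrow> ('s \<Rightarrow> real) \<Rightarrow> nat \<Rightarrow> 's \<Rightarrow> real" where
  "sdist M A p pol xi0 0 s = xi0 s"
| "sdist M A p pol xi0 (Suc h) s' =
     (\<integral>s. (\<integral>a. sdist M A p pol xi0 h s * pol s a * p s a s' \<partial>A) \<partial>M)"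

definition feat_exp :: "'s measure \<Rightarrow> 'a measure \<Rightarrow> ('s \<Rightarrow> 'a \<Rightarrow> 's \<Rightarrow> real) \<Rightarrow> ('s \<Rightarrow> 'a \<Rightarrow> real)
    \<Rightarrow> ('s \<Rightarrow> real) \<Rightarrow> ('s \<Rightarrow> 'a \<Rightarrow> real ^ 'd) \<Rightarrow> nat \<Rightarrow> real ^ 'd" where
  "feat_exp M A p pol xi0 phi h =
     (\<integral>s. (\<integral>a. (sdist M A p pol xi0 h s * pol s a) *\<^sub>R phi s a \<partial>A) \<partial>M)"

definition pmin :: "('s \<Rightarrow> 'a \<Rightarrow> 's \<Rightarrow> real) \<Rightarrow> ('s \<Rightarrow> 'a) \<Rightarrow> 's \<Rightarrow> real" where
  "pmin p pib s' = (INF s. p s (pib s) s')"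

definition pmass :: "'s measure \<Rightarrow> ('s \<Rightarrow> 'a \<Rightarrow> 's \<Rightarrow> real) \<Rightarrow> ('s \<Rightarrow> 'a) \<Rightarrow> 's set \<Rightarrow> real" where
  "pmass M p pib S = (\<integral>s'. indicator S s' * pmin p pib s' \<partial>M)"

definition Delta_q :: "'s measure \<Rightarrow> ('s \<Rightarrow> 'a \<Rightarrow> 's \<Rightarrow> real) \<Rightarrow> ('s \<Rightarrow> 'a) \<Rightarrow> 's set \<Rightarrow> 's set
    \<Rightarrow> real ^ 'd \<Rightarrow> 's \<Rightarrow> real ^ 'd" where
  "Delta_q M p pib Sov Slo x s' =
     (pmin p pib s' * (pmass M p pib Slo * indicator Sov s' - pmass M p pib Sov * indicator Slo s')) *\<^sub>R x"

definition ptilde :: "'s measure \<Rightarrow> ('s \<Rightarrow> 'a \<Rightarrow> 's \<Rightarrow> real) \<Rightarrow> ('s \<Rightarrow> 'a \<Rightarrow> real ^ 'd) \<Rightarrow> ('s \<Rightarrow> 'a)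
    \<Rightarrow> 's set \<Rightarrow> 's set \<Rightarrow> real ^ 'd \<Rightarrow> 's \<Rightarrow> 'a \<Rightarrow> 's \<Rightarrow> real" where
  "ptilde M p phi pib Sov Slo x s a s' = p s a s' - phi s a \<bullet> Delta_q M p pib Sov Slo x s'"

definition is_kernel :: "'s measure \<Rightarrow> ('s \<Rightarrow> 'a \<Rightarrow> 's \<Rightarrow> real) \<Rightarrow> bool" where
  "is_kernel M p \<longleftrightarrow> (\<forall>s a. (\<forall>s'. 0 \<le> p s a s') \<and> integrable M (p s a) \<and> (\<integral>s'. p s a s' \<partial>M) = 1)"

end

theory Submission imports Defs begin

lemma int_mult_bdd:
  fixes f g :: "'x \<Rightarrow> real"
  assumes "integrable M f" "g \<in> borel_measurable M" "\<And>x. \<bar>g x\<bar> \<le> B"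
  shows "integrable M (\<lambda>x. f x * g x)"
proof (rule Bochner_Integration.integrable_bound[where f="\<lambda>x. B * f x"])
  show "integrable M (\<lambda>x. B * f x)" using assms(1) by simp
  show "(\<lambda>x. f x * g x) \<in> borel_measurable M" using assms(1,2) by measurable
  show "AE x in M. norm (f x * g x) \<le> norm (B * f x)"
  proof (rule AE_I2)
    fix x have "\<bar>f x\<bar> * \<bar>g x\<bar> \<le> \<bar>f x\<bar> * B" using assms(3)[of x] by (simp add: mult_left_mono)
    moreover have "0 \<le> B" using assms(3)[of x] by linarith
    ultimately show "norm (f x * g x) \<le> norm (B * f x)" by (simp add: abs_mult mult.commute)
  qed
qed

lemma int_scale_bdd:
  fixes f :: "'x \<Rightarrow> real" and g :: "'x \<Rightarrow> 'v::{banach,second_countable_topology}"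
  assumes "integrable M f" "g \<in> borel_measurable M" "\<And>x. norm (g x) \<le> B"
  shows "integrable M (\<lambda>x. f x *\<^sub>R g x)"
proof (rule Bochner_Integration.integrable_bound[where f="\<lambda>x. B * f x"])
  show "integrable M (\<lambda>x. B * f x)" using assms(1) by simp
  show "(\<lambda>x. f x *\<^sub>R g x) \<in> borel_measurable M" using assms(1,2) by measurable
  show "AE x in M. norm (f x *\<^sub>R g x) \<le> norm (B * f x)"
  proof (rule AE_I2)
    fix x have "\<bar>f x\<bar> * norm (g x) \<le> \<bar>f x\<bar> * B" using assms(3)[of x] by (simp add: mult_left_mono)
    moreover have "0 \<le> B" using assms(3)[of x] norm_ge_zero[of "g x"] by linarith
    ultimately show "norm (f x *\<^sub>R g x) \<le> norm (B * f x)" by (simp add: abs_mult mult.commute)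
  qed
qed

locale mdp_base = M: sigma_finite_measure M + A: sigma_finite_measure A
  for M :: "'s measure" and A :: "'a measure" and pol :: "'s \<Rightarrow> 'a \<Rightarrow> real" +
  assumes spM: "space M = UNIV" and spA: "space A = UNIV"
    and pol_meas: "(\<lambda>(s,a). pol s a) \<in> borel_measurable (M \<Otimes>\<^sub>M A)"
    and pol_nn: "\<And>s a. 0 \<le> pol s a" and pol_int: "\<And>s. integrable A (pol s)"
    and pol_one: "\<And>s. (\<integral>a. pol s a \<partial>A) = 1"
begin

interpretation MA: pair_sigma_finite M A ..

lemma pol_meas'[measurable (raw)]:
  "f \<in> measurable N M \<Longrightarrow> g \<in> measurable N A \<Longrightarrow> (\<lambda>x. pol (f x) (g x)) \<in> borel_measurable N"
  using measurable_compose[OF measurable_Pair pol_meas, of f N g] by simp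

lemma pol_int_bdd:
  assumes g: "(\<lambda>x. g (fst x) (snd x)) \<in> borel_measurable (M \<Otimes>\<^sub>M A)" and b: "\<And>s a. \<bar>g s a\<bar> \<le> B"
  shows "integrable A (\<lambda>a. pol s a * g s a)" "\<bar>\<integral>a. pol s a * g s a \<partial>A\<bar> \<le> B"
    "(\<lambda>s. \<integral>a. pol s a * g s a \<partial>A) \<in> borel_measurable M"
proof -
  have gm: "g s \<in> borel_measurable A"
    using measurable_compose[OF measurable_Pair[OF measurable_const[of s] measurable_ident_sets[OF refl]] g] spM
    by (simp add: comp_def)
  show i: "integrable A (\<lambda>a. pol s a * g s a)" by (rule int_mult_bdd[OF pol_int gm b])
  have "(\<integral>a. pol s a * g s a \<partial>A) \<le> (\<integral>a. pol s a * B \<partial>A)"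
    using b pol_nn by (intro integral_mono i) (auto intro!: mult_left_mono simp: pol_int abs_le_iff)
  moreover have "(\<integral>a. pol s a * (-B) \<partial>A) \<le> (\<integral>a. pol s a * g s a \<partial>A)"
  proof (intro integral_mono i)
    fix a show "pol s a * (-B) \<le> pol s a * g s a" using b pol_nn by (metis abs_le_iff minus_le_iff mult_left_mono)
  qed (simp add: pol_int)
  ultimately show "\<bar>\<integral>a. pol s a * g s a \<partial>A\<bar> \<le> B" using pol_one[of s] by simp
  note [measurable] = g
  show "(\<lambda>s. \<integral>a. pol s a * g s a \<partial>A) \<in> borel_measurable M"
    by measurable
qed

end

locale mdp_kernel = mdp_base M A pol for M :: "'s measure" and A :: "'a measure" and pol +
  fixes q :: "'s \<Rightarrow> 'a \<Rightarrow> 's \<Rightarrow> real"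
  assumes q_meas: "(\<lambda>(s, a, s'). q s a s') \<in> borel_measurable (M \<Otimes>\<^sub>M A \<Otimes>\<^sub>M M)"
    and q_nn: "\<And>s a s'. 0 \<le> q s a s'" and q_int: "\<And>s a. integrable M (q s a)"
    and q_one: "\<And>s a. (\<integral>s'. q s a s' \<partial>M) = 1"
begin

interpretation MA: pair_sigma_finite M A ..

lemma q_meas'[measurable (raw)]:
  "f \<in> measurable N M \<Longrightarrow> g \<in> measurable N A \<Longrightarrow> h \<in> measurable N M \<Longrightarrow>
   (\<lambda>x. q (f x) (g x) (h x)) \<in> borel_measurable N"
  using measurable_compose[OF measurable_Pair[OF _ measurable_Pair] q_meas, of f N g h] by simp

lemma q_int_bdd:
  assumes f: "f \<in> borel_measurable M" and b: "\<And>s. \<bar>f s\<bar> \<le> B"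
  shows "integrable M (\<lambda>s'. q s a s' * f s')" "\<bar>\<integral>s'. q s a s' * f s' \<partial>M\<bar> \<le> B"
    "(\<lambda>x. \<integral>s'. q (fst x) (snd x) s' * f s' \<partial>M) \<in> borel_measurable (M \<Otimes>\<^sub>M A)"
proof -
  show i: "integrable M (\<lambda>s'. q s a s' * f s')" by (rule int_mult_bdd[OF q_int f b])
  have "(\<integral>s'. q s a s' * f s' \<partial>M) \<le> (\<integral>s'. q s a s' * B \<partial>M)"
    using b q_nn by (intro integral_mono i) (auto intro!: mult_left_mono simp: q_int abs_le_iff)
  moreover have "(\<integral>s'. q s a s' * (-B) \<partial>M) \<le> (\<integral>s'. q s a s' * f s' \<partial>M)"
  proof (intro integral_mono i)
    fix s' show "q s a s' * (-B) \<le> q s a s' * f s'" using b q_nn by (metis abs_le_iff minus_le_iff mult_left_mono)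
  qed (simp add: q_int)
  ultimately show "\<bar>\<integral>s'. q s a s' * f s' \<partial>M\<bar> \<le> B" using q_one[of s a] by simp
  note [measurable] = f
  show "(\<lambda>x. \<integral>s'. q (fst x) (snd x) s' * f s' \<partial>M) \<in> borel_measurable (M \<Otimes>\<^sub>M A)"
    by measurable
qed

lemma transport:
  assumes d[measurable]: "d \<in> borel_measurable M" and dnn: "\<And>s. 0 \<le> d s" and dint: "integrable M d"
    and f[measurable]: "f \<in> borel_measurable M" and fb: "\<And>s. \<bar>f s\<bar> \<le> B"
  shows "integrable M (\<lambda>s'. \<integral>s. (\<integral>a. d s * pol s a * q s a s' \<partial>A) \<partial>M)"
    and "(\<integral>s. d s * (\<integral>a. pol s a * (\<integral>s'. q s a s' * f s' \<partial>M) \<partial>A) \<partial>M)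
         = (\<integral>s'. (\<integral>s. (\<integral>a. d s * pol s a * q s a s' \<partial>A) \<partial>M) * f s' \<partial>M)"
proof -
  interpret NM: pair_sigma_finite "M \<Otimes>\<^sub>M A" M ..
  define G where "G = (\<lambda>(z::'s\<times>'a, s'::'s). d (fst z) * pol (fst z) (snd z) * q (fst z) (snd z) s')"
  have Gm[measurable]: "G \<in> borel_measurable ((M \<Otimes>\<^sub>M A) \<Otimes>\<^sub>M M)" unfolding G_def by measurable
  have dp_int: "integrable (M \<Otimes>\<^sub>M A) (\<lambda>z. d (fst z) * pol (fst z) (snd z))"
  proof (rule MA.Fubini_integrable)
    show "(\<lambda>z. d (fst z) * pol (fst z) (snd z)) \<in> borel_measurable (M \<Otimes>\<^sub>M A)" by measurable
    have "\<And>s. (\<integral>a. norm (d (fst (s,a)) * pol (fst (s,a)) (snd (s,a))) \<partial>A) = d s"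
      using dnn pol_nn pol_one by (simp add: abs_mult)
    then show "integrable M (\<lambda>x. \<integral>y. norm (d (fst (x,y)) * pol (fst (x,y)) (snd (x,y))) \<partial>A)"
      using dint by simp
    show "AE x in M. integrable A (\<lambda>y. d (fst (x,y)) * pol (fst (x,y)) (snd (x,y)))"
      by (simp add: pol_int)
  qed
  have G_int: "integrable ((M \<Otimes>\<^sub>M A) \<Otimes>\<^sub>M M) G"
  proof (rule NM.Fubini_integrable)
    show "G \<in> borel_measurable ((M \<Otimes>\<^sub>M A) \<Otimes>\<^sub>M M)" by measurable
    have "\<And>z. (\<integral>s'. norm (G (z,s')) \<partial>M) = d (fst z) * pol (fst z) (snd z)"
      using dnn pol_nn q_nn q_one by (simp add: G_def abs_mult)
    then show "integrable (M \<Otimes>\<^sub>M A) (\<lambda>z. \<integral>s'. norm (G (z,s')) \<partial>M)"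
      using dp_int by simp
    show "AE z in M \<Otimes>\<^sub>M A. integrable M (\<lambda>s'. G (z,s'))"
      by (simp add: G_def q_int)
  qed
  have Gf_int: "integrable ((M \<Otimes>\<^sub>M A) \<Otimes>\<^sub>M M) (\<lambda>(z,s'). G (z,s') * f s')"
    using int_mult_bdd[OF G_int, of "\<lambda>x. f (snd x)" B] fb by (simp add: case_prod_beta')
  have Gint2: "integrable ((M \<Otimes>\<^sub>M A) \<Otimes>\<^sub>M M) (\<lambda>(z,s'). G (z,s'))"
    using G_int by (simp add: case_prod_beta')
  have ae: "AE s' in M. (\<integral>z. G (z,s') \<partial>(M \<Otimes>\<^sub>M A)) = (\<integral>s. (\<integral>a. d s * pol s a * q s a s' \<partial>A) \<partial>M)"
    using NM.AE_integrable_snd[OF Gint2]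
  proof eventually_elim
    case (elim s')
    show ?case
      using MA.integral_fst'[OF elim] by (simp add: G_def)
  qed
  have Dm: "(\<lambda>s'. \<integral>s. (\<integral>a. d s * pol s a * q s a s' \<partial>A) \<partial>M) \<in> borel_measurable M"
    by measurable
  show "integrable M (\<lambda>s'. \<integral>s. (\<integral>a. d s * pol s a * q s a s' \<partial>A) \<partial>M)"
    using NM.integrable_snd[OF Gint2] Dm ae by (rule integrable_cong_AE_imp)
  have e1: "\<And>s. d s * (\<integral>a. pol s a * (\<integral>s'. q s a s' * f s' \<partial>M) \<partial>A)
      = (\<integral>a. (\<integral>s'. G ((s,a),s') * f s' \<partial>M) \<partial>A)"
    by (simp add: G_def mult.assoc)
  have "(\<integral>s. d s * (\<integral>a. pol s a * (\<integral>s'. q s a s' * f s' \<partial>M) \<partial>A) \<partial>M)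
      = (\<integral>s. (\<integral>a. (\<integral>s'. G ((s,a),s') * f s' \<partial>M) \<partial>A) \<partial>M)"
    by (simp only: e1)
  also have "\<dots> = (\<integral>z. (\<integral>s'. G (z,s') * f s' \<partial>M) \<partial>(M \<Otimes>\<^sub>M A))"
    using MA.integral_fst'[OF NM.integrable_fst'[OF Gf_int]] by simp
  also have "\<dots> = (\<integral>x. (\<lambda>(z,s'). G (z,s') * f s') x \<partial>((M \<Otimes>\<^sub>M A) \<Otimes>\<^sub>M M))"
    using NM.integral_fst'[OF Gf_int] by simp
  also have "\<dots> = (\<integral>s'. (\<integral>z. G (z,s') * f s' \<partial>(M \<Otimes>\<^sub>M A)) \<partial>M)"
    using NM.integral_snd[of "\<lambda>z s'. G (z,s') * f s'"] Gf_int by simp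
  also have "\<dots> = (\<integral>s'. (\<integral>z. G (z,s') \<partial>(M \<Otimes>\<^sub>M A)) * f s' \<partial>M)"
    by simp
  also have "\<dots> = (\<integral>s'. (\<integral>s. (\<integral>a. d s * pol s a * q s a s' \<partial>A) \<partial>M) * f s' \<partial>M)"
    using ae by (intro integral_cong_AE) (measurable, auto elim: eventually_mono)
  finally show "(\<integral>s. d s * (\<integral>a. pol s a * (\<integral>s'. q s a s' * f s' \<partial>M) \<partial>A) \<partial>M)
         = (\<integral>s'. (\<integral>s. (\<integral>a. d s * pol s a * q s a s' \<partial>A) \<partial>M) * f s' \<partial>M)" .
qed

lemma Vrem_props:
  assumes r_meas: "(\<lambda>(s, a). r s a) \<in> borel_measurable (M \<Otimes>\<^sub>M A)" and rb: "\<And>s a. \<bar>r s a\<bar> \<le> R"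
  shows "Vrem M A q r pol k \<in> borel_measurable M \<and> (\<forall>s. \<bar>Vrem M A q r pol k s\<bar> \<le> real k * R)"
proof (induction k)
  case 0
  then show ?case by simp
next
  case (Suc k)
  have Vm[measurable]: "Vrem M A q r pol k \<in> borel_measurable M" using Suc by blast
  have Vb: "\<And>s. \<bar>Vrem M A q r pol k s\<bar> \<le> real k * R" using Suc by blast
  have rm[measurable]: "(\<lambda>x. r (fst x) (snd x)) \<in> borel_measurable (M \<Otimes>\<^sub>M A)"
    using r_meas by (simp add: case_prod_beta')
  define g where "g = (\<lambda>s a. r s a + (\<integral>s'. q s a s' * Vrem M A q r pol k s' \<partial>M))"
  have gm: "(\<lambda>x. g (fst x) (snd x)) \<in> borel_measurable (M \<Otimes>\<^sub>M A)"
    unfolding g_def using q_int_bdd(3)[OF Vm Vb] by measurable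
  have gb: "\<bar>g s a\<bar> \<le> R + real k * R" for s a
    unfolding g_def using q_int_bdd(2)[OF Vm Vb, of s a] rb[of s a] by (smt (verit))
  have eq: "Vrem M A q r pol (Suc k) = (\<lambda>s. \<integral>a. pol s a * g s a \<partial>A)"
    by (simp add: g_def fun_eq_iff)
  show ?case unfolding eq using pol_int_bdd(2,3)[OF gm gb] by (simp add: algebra_simps)
qed

lemma sdist_props:
  assumes xm: "xi0 \<in> borel_measurable M" and xnn: "\<And>s. 0 \<le> xi0 s" and xint: "integrable M xi0"
  shows "sdist M A q pol xi0 h \<in> borel_measurable M \<and> (\<forall>s. 0 \<le> sdist M A q pol xi0 h s)
         \<and> integrable M (sdist M A q pol xi0 h)"
proof (induction h)
  case 0
  then show ?case using assms by simp
next
  case (Suc h)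
  have dm[measurable]: "sdist M A q pol xi0 h \<in> borel_measurable M" using Suc by blast
  have dnn: "\<And>s. 0 \<le> sdist M A q pol xi0 h s" using Suc by blast
  have di: "integrable M (sdist M A q pol xi0 h)" using Suc by blast
  have sd: "sdist M A q pol xi0 (Suc h) = (\<lambda>s'. \<integral>s. (\<integral>a. sdist M A q pol xi0 h s * pol s a * q s a s' \<partial>A) \<partial>M)"
    by (rule ext) simp
  have "(\<lambda>s'. \<integral>s. (\<integral>a. sdist M A q pol xi0 h s * pol s a * q s a s' \<partial>A) \<partial>M) \<in> borel_measurable M"
    by measurable
  then have "sdist M A q pol xi0 (Suc h) \<in> borel_measurable M" by (simp only: sd)
  moreover have "\<forall>s. 0 \<le> sdist M A q pol xi0 (Suc h) s"
    using dnn pol_nn q_nn by (auto intro!: integral_nonneg)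
  moreover have "integrable M (sdist M A q pol xi0 (Suc h))"
    using transport(1)[OF dm dnn di, of "\<lambda>_. 0" 0] by (simp only: sd) simp
  ultimately show ?case by blast
qed

end

locale mdp_two = P: mdp_kernel M A pol p + Q: mdp_kernel M A pol q
  for M :: "'s measure" and A :: "'a measure" and pol p q +
  fixes r :: "'s \<Rightarrow> 'a \<Rightarrow> real" and xi0 :: "'s \<Rightarrow> real" and R :: real
  assumes r_meas: "(\<lambda>(s, a). r s a) \<in> borel_measurable (M \<Otimes>\<^sub>M A)" and rb: "\<And>s a. \<bar>r s a\<bar> \<le> R"
    and xm: "xi0 \<in> borel_measurable M" and xnn: "\<And>s. 0 \<le> xi0 s" and xint: "integrable M xi0"
begin

definition g where "g k s a = (\<integral>s'. p s a s' * Vrem M A p r pol k s' \<partial>M) - (\<integral>s'. q s a s' * Vrem M A p r pol k s' \<partial>M)"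

lemma Vm[measurable]: "Vrem M A p r pol k \<in> borel_measurable M"
  using P.Vrem_props[OF r_meas rb] by blast
lemma Vb: "\<bar>Vrem M A p r pol k s\<bar> \<le> real k * R"
  using P.Vrem_props[OF r_meas rb] by blast
lemma Wm[measurable]: "Vrem M A q r pol k \<in> borel_measurable M"
  using Q.Vrem_props[OF r_meas rb] by blast
lemma Wb: "\<bar>Vrem M A q r pol k s\<bar> \<le> real k * R"
  using Q.Vrem_props[OF r_meas rb] by blast
lemma dm[measurable]: "sdist M A q pol xi0 h \<in> borel_measurable M"
  using Q.sdist_props[OF xm xnn xint] by blast
lemma dnn: "0 \<le> sdist M A q pol xi0 h s"
  using Q.sdist_props[OF xm xnn xint] by blast
lemma di: "integrable M (sdist M A q pol xi0 h)"
  using Q.sdist_props[OF xm xnn xint] by blast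
lemma rm[measurable]: "(\<lambda>x. r (fst x) (snd x)) \<in> borel_measurable (M \<Otimes>\<^sub>M A)"
  using r_meas by (simp add: case_prod_beta')

lemma gm[measurable]: "(\<lambda>x. g k (fst x) (snd x)) \<in> borel_measurable (M \<Otimes>\<^sub>M A)"
  unfolding g_def using P.q_int_bdd(3)[OF Vm Vb] Q.q_int_bdd(3)[OF Vm Vb] by measurable
lemma gb: "\<bar>g k s a\<bar> \<le> 2 * (real k * R)"
  unfolding g_def using P.q_int_bdd(2)[OF Vm Vb, of s a k] Q.q_int_bdd(2)[OF Vm Vb, of s a k] by linarith

lemma step:
  "(\<integral>s. sdist M A q pol xi0 h s * (Vrem M A p r pol (Suc k) s - Vrem M A q r pol (Suc k) s) \<partial>M)
   = (\<integral>s. sdist M A q pol xi0 h s * (\<integral>a. pol s a * g k s a \<partial>A) \<partial>M)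
     + (\<integral>s. sdist M A q pol xi0 (Suc h) s * (Vrem M A p r pol k s - Vrem M A q r pol k s) \<partial>M)"
proof -
  define V where "V = Vrem M A p r pol k"
  define W where "W = Vrem M A q r pol k"
  define X1 where "X1 = (\<lambda>s a. \<integral>s'. p s a s' * V s' \<partial>M)"
  define X2 where "X2 = (\<lambda>s a. \<integral>s'. q s a s' * V s' \<partial>M)"
  define X3 where "X3 = (\<lambda>s a. \<integral>s'. q s a s' * W s' \<partial>M)"
  define Y where "Y = (\<lambda>s a. \<integral>s'. q s a s' * (V s' - W s') \<partial>M)"
  have Vm'[measurable]: "V \<in> borel_measurable M" "W \<in> borel_measurable M" unfolding V_def W_def by measurable
  have Vb': "\<And>s. \<bar>V s\<bar> \<le> real k * R" "\<And>s. \<bar>W s\<bar> \<le> real k * R" unfolding V_def W_def using Vb Wb by auto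
  have VWb: "\<bar>V s - W s\<bar> \<le> 2 * (real k * R)" for s using Vb'(1)[of s] Vb'(2)[of s] by linarith
  have X1m: "(\<lambda>x. X1 (fst x) (snd x)) \<in> borel_measurable (M \<Otimes>\<^sub>M A)" unfolding X1_def by (rule P.q_int_bdd(3)[OF Vm'(1) Vb'(1)])
  have X2m: "(\<lambda>x. X2 (fst x) (snd x)) \<in> borel_measurable (M \<Otimes>\<^sub>M A)" unfolding X2_def by (rule Q.q_int_bdd(3)[OF Vm'(1) Vb'(1)])
  have X3m: "(\<lambda>x. X3 (fst x) (snd x)) \<in> borel_measurable (M \<Otimes>\<^sub>M A)" unfolding X3_def by (rule Q.q_int_bdd(3)[OF Vm'(2) Vb'(2)])
  have Ym: "(\<lambda>x. Y (fst x) (snd x)) \<in> borel_measurable (M \<Otimes>\<^sub>M A)" unfolding Y_def by (rule Q.q_int_bdd(3)) (measurable, rule VWb)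
  have X1b: "\<And>s a. \<bar>X1 s a\<bar> \<le> real k * R" unfolding X1_def by (rule P.q_int_bdd(2)[OF Vm'(1) Vb'(1)])
  have X2b: "\<And>s a. \<bar>X2 s a\<bar> \<le> real k * R" unfolding X2_def by (rule Q.q_int_bdd(2)[OF Vm'(1) Vb'(1)])
  have X3b: "\<And>s a. \<bar>X3 s a\<bar> \<le> real k * R" unfolding X3_def by (rule Q.q_int_bdd(2)[OF Vm'(2) Vb'(2)])
  have Yb: "\<And>s a. \<bar>Y s a\<bar> \<le> 2 * (real k * R)" unfolding Y_def by (rule Q.q_int_bdd(2)) (measurable, rule VWb)
  have Yeq: "Y s a = X2 s a - X3 s a" for s a
    unfolding Y_def X2_def X3_def
    by (simp add: right_diff_distrib Q.q_int_bdd(1)[OF Vm'(1) Vb'(1)] Q.q_int_bdd(1)[OF Vm'(2) Vb'(2)])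
  have gX: "g k s a = X1 s a - X2 s a" for s a unfolding g_def X1_def X2_def V_def ..
  have ri: "integrable A (\<lambda>a. pol s a * r s a)" for s using P.pol_int_bdd(1)[OF rm rb] .
  have i1: "integrable A (\<lambda>a. pol s a * X1 s a)" for s using P.pol_int_bdd(1)[OF X1m X1b] .
  have i2: "integrable A (\<lambda>a. pol s a * X2 s a)" for s using P.pol_int_bdd(1)[OF X2m X2b] .
  have i3: "integrable A (\<lambda>a. pol s a * X3 s a)" for s using P.pol_int_bdd(1)[OF X3m X3b] .
  have pw: "Vrem M A p r pol (Suc k) s - Vrem M A q r pol (Suc k) s
      = (\<integral>a. pol s a * g k s a \<partial>A) + (\<integral>a. pol s a * Y s a \<partial>A)" for s
  proof -
    have "Vrem M A p r pol (Suc k) s = (\<integral>a. pol s a * r s a \<partial>A) + (\<integral>a. pol s a * X1 s a \<partial>A)"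
      by (simp add: X1_def V_def distrib_left ri[unfolded X1_def V_def] i1[unfolded X1_def V_def])
    moreover have "Vrem M A q r pol (Suc k) s = (\<integral>a. pol s a * r s a \<partial>A) + (\<integral>a. pol s a * X3 s a \<partial>A)"
      by (simp add: X3_def W_def distrib_left ri[unfolded X3_def W_def] i3[unfolded X3_def W_def])
    moreover have "(\<integral>a. pol s a * g k s a \<partial>A) = (\<integral>a. pol s a * X1 s a \<partial>A) - (\<integral>a. pol s a * X2 s a \<partial>A)"
      by (simp add: gX right_diff_distrib i1 i2)
    moreover have "(\<integral>a. pol s a * Y s a \<partial>A) = (\<integral>a. pol s a * X2 s a \<partial>A) - (\<integral>a. pol s a * X3 s a \<partial>A)"
      by (simp add: Yeq right_diff_distrib i2 i3)
    ultimately show ?thesis by simp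
  qed
  have Am: "(\<lambda>s. \<integral>a. pol s a * g k s a \<partial>A) \<in> borel_measurable M" by (rule P.pol_int_bdd(3)[OF gm gb])
  have Bm: "(\<lambda>s. \<integral>a. pol s a * Y s a \<partial>A) \<in> borel_measurable M" by (rule P.pol_int_bdd(3)[OF Ym Yb])
  have ia: "integrable M (\<lambda>s. sdist M A q pol xi0 h s * (\<integral>a. pol s a * g k s a \<partial>A))"
    by (rule int_mult_bdd[OF di Am P.pol_int_bdd(2)[OF gm gb]])
  have ib: "integrable M (\<lambda>s. sdist M A q pol xi0 h s * (\<integral>a. pol s a * Y s a \<partial>A))"
    by (rule int_mult_bdd[OF di Bm P.pol_int_bdd(2)[OF Ym Yb]])
  have "(\<integral>s. sdist M A q pol xi0 h s * (Vrem M A p r pol (Suc k) s - Vrem M A q r pol (Suc k) s) \<partial>M)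
      = (\<integral>s. sdist M A q pol xi0 h s * (\<integral>a. pol s a * g k s a \<partial>A) \<partial>M)
        + (\<integral>s. sdist M A q pol xi0 h s * (\<integral>a. pol s a * Y s a \<partial>A) \<partial>M)"
    by (simp only: pw distrib_left Bochner_Integration.integral_add[OF ia ib])
  also have "(\<integral>s. sdist M A q pol xi0 h s * (\<integral>a. pol s a * Y s a \<partial>A) \<partial>M)
     = (\<integral>s. sdist M A q pol xi0 (Suc h) s * (V s - W s) \<partial>M)"
  proof -
    have VWm: "(\<lambda>s. V s - W s) \<in> borel_measurable M" by measurable
    show ?thesis unfolding Y_def Q.transport(2)[OF dm dnn di VWm VWb] by simp
  qed
  finally show ?thesis by (simp add: V_def W_def)
qed

lemma telescope:
  "(\<integral>s. sdist M A q pol xi0 h s * (Vrem M A p r pol k s - Vrem M A q r pol k s) \<partial>M)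
   = (\<Sum>i<k. \<integral>s. sdist M A q pol xi0 (h + i) s * (\<integral>a. pol s a * g (k - 1 - i) s a \<partial>A) \<partial>M)"
proof (induction k arbitrary: h)
  case 0
  then show ?case by simp
next
  case (Suc k)
  show ?case
    unfolding step Suc sum.lessThan_Suc_shift by simp
qed

end

theorem lemma14:
  fixes M :: "'s measure" and A :: "'a measure"
    and p :: "'s \<Rightarrow> 'a \<Rightarrow> 's \<Rightarrow> real" and r :: "'s \<Rightarrow> 'a \<Rightarrow> real"
    and pol :: "'s \<Rightarrow> 'a \<Rightarrow> real" and xi0 :: "'s \<Rightarrow> real"
    and phi :: "'s \<Rightarrow> 'a \<Rightarrow> real ^ 'd" and x :: "real ^ 'd"
    and pib :: "'s \<Rightarrow> 'a" and Sov Slo :: "'s set" and H :: nat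
  assumes M: "sigma_finite_measure M" "space M = UNIV"
    and A: "sigma_finite_measure A" "space A = UNIV"
    and p_meas: "(\<lambda>(s, a, s'). p s a s') \<in> borel_measurable (M \<Otimes>\<^sub>M A \<Otimes>\<^sub>M M)"
    and p_kernel: "is_kernel M p"
    and r_meas: "(\<lambda>(s, a). r s a) \<in> borel_measurable (M \<Otimes>\<^sub>M A)"
    and r_bdd: "\<exists>B. \<forall>s a. \<bar>r s a\<bar> \<le> B"
    and pol_meas: "(\<lambda>(s, a). pol s a) \<in> borel_measurable (M \<Otimes>\<^sub>M A)"
    and pol_dens: "\<forall>s. (\<forall>a. 0 \<le> pol s a) \<and> integrable A (pol s) \<and> (\<integral>a. pol s a \<partial>A) = 1"
    and xi0_meas: "xi0 \<in> borel_measurable M"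
    and xi0_dens: "(\<forall>s. 0 \<le> xi0 s) \<and> integrable M xi0 \<and> (\<integral>s. xi0 s \<partial>M) = 1"
    and phi_meas: "(\<lambda>(s, a). phi s a) \<in> borel_measurable (M \<Otimes>\<^sub>M A)"
    and phi_bdd: "\<exists>B. \<forall>s a. norm (phi s a) \<le> B"
    and sets: "Sov \<in> sets M" "Slo \<in> sets M" "Sov \<inter> Slo = {}"
    and pmin_meas: "pmin p pib \<in> borel_measurable M"
    and V_up: "\<forall>h \<in> {1..H}. \<forall>s \<in> Sov.
                 Vfun M A p r pol H h s \<ge> 3/4 * real (H - h + 1)"
    and V_lo: "\<forall>h \<in> {1..H}. \<forall>s \<in> Slo.
                 Vfun M A p r pol H h s \<le> 1/4 * real (H - h + 1)"
    and phi_x: "\<forall>s a. phi s a \<bullet> x \<ge> 0"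
    and pt_meas: "(\<lambda>(s, a, s'). ptilde M p phi pib Sov Slo x s a s') \<in> borel_measurable (M \<Otimes>\<^sub>M A \<Otimes>\<^sub>M M)"
    and pt_kernel: "is_kernel M (ptilde M p phi pib Sov Slo x)"
  shows "pol_value M A p r pol xi0 H - pol_value M A (ptilde M p phi pib Sov Slo x) r pol xi0 H
         \<ge> 1/2 * pmass M p pib Sov * pmass M p pib Slo *
           ((\<Sum>h<H. real (H - h) *\<^sub>R feat_exp M A (ptilde M p phi pib Sov Slo x) pol xi0 phi h) \<bullet> x)"
proof -
  obtain R where R: "\<And>s a. \<bar>r s a\<bar> \<le> R" using r_bdd by blast
  obtain Bf where Bf: "\<And>s a. norm (phi s a) \<le> Bf" using phi_bdd by blast
  define q where "q = ptilde M p phi pib Sov Slo x"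
  define pm where "pm = pmin p pib"
  define pov where "pov = pmass M p pib Sov"
  define plo where "plo = pmass M p pib Slo"
  have base: "mdp_base M A pol"
    unfolding mdp_base_def mdp_base_axioms_def using M A pol_meas pol_dens by auto
  have kp: "mdp_kernel M A pol p"
    unfolding mdp_kernel_def mdp_kernel_axioms_def using base p_meas p_kernel by (auto simp: is_kernel_def)
  have kq: "mdp_kernel M A pol q"
    unfolding mdp_kernel_def mdp_kernel_axioms_def q_def using base pt_meas pt_kernel by (auto simp: is_kernel_def)
  interpret T: mdp_two M A pol p q r xi0 R
    unfolding mdp_two_def mdp_two_axioms_def using kp kq r_meas R xi0_meas xi0_dens by auto
  have spM: "space M = UNIV" by (rule M(2))
  note [measurable] = pmin_meas[folded pm_def] sets(1,2)
  have phi_meas'[measurable (raw)]: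
    "f \<in> measurable N M \<Longrightarrow> g \<in> measurable N A \<Longrightarrow> (\<lambda>y. phi (f y) (g y)) \<in> borel_measurable N" for f g and N :: "'z measure"
    using measurable_compose[OF measurable_Pair phi_meas, of f N g] by simp
  have xV: "integrable M (\<lambda>s. xi0 s * Vrem M A p r pol (Suc H) s)"
    by (rule int_mult_bdd[OF _ T.Vm T.Vb]) (use xi0_dens in auto)
  have xW: "integrable M (\<lambda>s. xi0 s * Vrem M A q r pol (Suc H) s)"
    by (rule int_mult_bdd[OF _ T.Wm T.Wb]) (use xi0_dens in auto)
  have diff: "pol_value M A p r pol xi0 H - pol_value M A q r pol xi0 H
     = (\<Sum>i<Suc H. \<integral>s. sdist M A q pol xi0 i s * (\<integral>a. pol s a * T.g (H - i) s a \<partial>A) \<partial>M)"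
  proof -
    have "pol_value M A p r pol xi0 H - pol_value M A q r pol xi0 H
        = (\<integral>s. sdist M A q pol xi0 0 s * (Vrem M A p r pol (Suc H) s - Vrem M A q r pol (Suc H) s) \<partial>M)"
      unfolding pol_value_def Vfun_def sdist.simps(1) diff_zero right_diff_distrib
      by (rule Bochner_Integration.integral_diff[OF xV xW, symmetric])
    also have "\<dots> = (\<Sum>i<Suc H. \<integral>s. sdist M A q pol xi0 i s * (\<integral>a. pol s a * T.g (H - i) s a \<partial>A) \<partial>M)"
      unfolding T.telescope by simp
    finally show ?thesis .
  qed
  have pm_nn: "0 \<le> pm s" for s
    unfolding pm_def pmin_def using p_kernel by (auto simp: is_kernel_def intro!: cINF_greatest)
  have pm_le: "pm s' \<le> p s0 (pib s0) s'" for s' s0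
    unfolding pm_def pmin_def using p_kernel
    by (intro cINF_lower) (auto simp: is_kernel_def bdd_below_def)
  have pm_int: "integrable M pm"
  proof (rule Bochner_Integration.integrable_bound[where f="p undefined (pib undefined)"])
    show "integrable M (p undefined (pib undefined))" using p_kernel by (simp add: is_kernel_def)
    show "pm \<in> borel_measurable M" by measurable
    show "AE x in M. norm (pm x) \<le> norm (p undefined (pib undefined) x)"
      using pm_nn pm_le by (auto intro!: AE_I2 order_trans[OF _ abs_ge_self])
  qed
  have pov_nn: "0 \<le> pov" and plo_nn: "0 \<le> plo"
    unfolding pov_def plo_def pmass_def using pm_nn[unfolded pm_def]
    by (auto intro!: integral_nonneg simp: indicator_def)
  define K where "K k = (\<integral>s'. (pm s' * (plo * indicator Sov s' - pov * indicator Slo s')) * Vrem M A p r pol k s' \<partial>M)" for k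
  have gK: "T.g k s a = (phi s a \<bullet> x) * K k" for k s a
  proof -
    let ?V = "Vrem M A p r pol k"
    have "T.g k s a = (\<integral>s'. p s a s' * ?V s' - q s a s' * ?V s' \<partial>M)"
      unfolding T.g_def
      by (rule Bochner_Integration.integral_diff[symmetric]) (rule T.P.q_int_bdd(1)[OF T.Vm T.Vb], rule T.Q.q_int_bdd(1)[OF T.Vm T.Vb])
    also have "\<dots> = (\<integral>s'. (phi s a \<bullet> x) * ((pm s' * (plo * indicator Sov s' - pov * indicator Slo s')) * ?V s') \<partial>M)"
      by (rule Bochner_Integration.integral_cong)
         (simp_all add: q_def ptilde_def Delta_q_def pm_def pov_def plo_def algebra_simps)
    also have "\<dots> = (phi s a \<bullet> x) * K k" by (simp add: K_def)
    finally show ?thesis .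
  qed
  have ind_int: "integrable M (\<lambda>s'. pm s' * indicator S s' * Vrem M A p r pol k s')" if "S \<in> sets M" for S k
  proof -
    have "integrable M (\<lambda>s'. pm s' * indicator S s')"
      by (rule int_mult_bdd[OF pm_int, where B=1]) (use that in \<open>auto simp: indicator_def\<close>)
    then show ?thesis by (rule int_mult_bdd[OF _ T.Vm T.Vb])
  qed
  have ind_int': "integrable M (\<lambda>s'. pm s' * indicator S s' * c)" if "S \<in> sets M" for S c
  proof -
    have "integrable M (\<lambda>s'. pm s' * indicator S s')"
      by (rule int_mult_bdd[OF pm_int, where B=1]) (use that in \<open>auto simp: indicator_def\<close>)
    then show ?thesis by simp
  qed
  have Kb: "real k * (pov * plo / 2) \<le> K k" if "k \<le> H" for k
  proof (cases "k = 0")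
    case True
    then show ?thesis by (simp add: K_def)
  next
    case False
    let ?V = "Vrem M A p r pol k"
    have hk: "Suc H - k \<in> {1..H}" using False that by auto
    have Vk: "Vfun M A p r pol H (Suc H - k) s = ?V s" for s
      unfolding Vfun_def using that by (simp add: Suc_diff_le)
    have rk: "real (H - (Suc H - k) + 1) = real k" using False that by simp
    have Vup: "3/4 * real k \<le> ?V s" if "s \<in> Sov" for s
      using V_up hk that Vk rk by metis
    have Vlo: "?V s \<le> 1/4 * real k" if "s \<in> Slo" for s
      using V_lo hk that Vk rk by metis
    define J1 where "J1 = (\<integral>s'. pm s' * indicator Sov s' * ?V s' \<partial>M)"
    define J2 where "J2 = (\<integral>s'. pm s' * indicator Slo s' * ?V s' \<partial>M)"
    have KJ: "K k = plo * J1 - pov * J2"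
    proof -
      have "K k = (\<integral>s'. plo * (pm s' * indicator Sov s' * ?V s') - pov * (pm s' * indicator Slo s' * ?V s') \<partial>M)"
        unfolding K_def by (rule Bochner_Integration.integral_cong) (simp_all add: algebra_simps)
      also have "\<dots> = plo * J1 - pov * J2"
        unfolding J1_def J2_def
        using ind_int[OF sets(1), of k] ind_int[OF sets(2), of k] by simp
      finally show ?thesis .
    qed
    have pov_eq: "(\<integral>s'. pm s' * indicator Sov s' * c \<partial>M) = c * pov" for c
      unfolding pov_def pmass_def pm_def by (simp add: mult.commute)
    have plo_eq: "(\<integral>s'. pm s' * indicator Slo s' * c \<partial>M) = c * plo" for c
      unfolding plo_def pmass_def pm_def by (simp add: mult.commute)
    have J1b: "3/4 * real k * pov \<le> J1"
    proof -
      have "(\<integral>s'. pm s' * indicator Sov s' * (3/4 * real k) \<partial>M) \<le> J1"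
        unfolding J1_def
      proof (rule integral_mono[OF ind_int'[OF sets(1)] ind_int[OF sets(1)]])
        fix s' show "pm s' * indicator Sov s' * (3/4 * real k) \<le> pm s' * indicator Sov s' * ?V s'"
        proof (cases "s' \<in> Sov")
          case True
          have "pm s' * (3/4 * real k) \<le> pm s' * ?V s'" by (rule mult_left_mono[OF Vup[OF True] pm_nn])
          then show ?thesis using True by simp
        qed simp
      qed
      then show ?thesis by (simp only: pov_eq)
    qed
    have J2b: "J2 \<le> 1/4 * real k * plo"
    proof -
      have "J2 \<le> (\<integral>s'. pm s' * indicator Slo s' * (1/4 * real k) \<partial>M)"
        unfolding J2_def
      proof (rule integral_mono[OF ind_int[OF sets(2)] ind_int'[OF sets(2)]])
        fix s' show "pm s' * indicator Slo s' * ?V s' \<le> pm s' * indicator Slo s' * (1/4 * real k)"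
        proof (cases "s' \<in> Slo")
          case True
          have "pm s' * ?V s' \<le> pm s' * (1/4 * real k)" by (rule mult_left_mono[OF Vlo[OF True] pm_nn])
          then show ?thesis using True by simp
        qed simp
      qed
      then show ?thesis by (simp only: plo_eq)
    qed
    have "plo * (3/4 * real k * pov) \<le> plo * J1" using J1b plo_nn by (rule mult_left_mono)
    moreover have "pov * J2 \<le> pov * (1/4 * real k * plo)" using J2b pov_nn by (rule mult_left_mono)
    ultimately show ?thesis unfolding KJ by (simp add: algebra_simps)
  qed
  define Fe where "Fe i = (\<integral>s. sdist M A q pol xi0 i s * (\<integral>a. pol s a * (phi s a \<bullet> x) \<partial>A) \<partial>M)" for i
  have Fe_nn: "0 \<le> Fe i" for i
    unfolding Fe_def using T.dnn pol_dens phi_x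
    by (auto intro!: integral_nonneg mult_nonneg_nonneg)
  have Tterm: "(\<integral>s. sdist M A q pol xi0 i s * (\<integral>a. pol s a * T.g j s a \<partial>A) \<partial>M) = K j * Fe i" for i j
  proof -
    have "\<And>s a. pol s a * T.g j s a = K j * (pol s a * (phi s a \<bullet> x))" by (simp add: gK)
    then have "(\<integral>s. sdist M A q pol xi0 i s * (\<integral>a. pol s a * T.g j s a \<partial>A) \<partial>M)
      = (\<integral>s. K j * (sdist M A q pol xi0 i s * (\<integral>a. pol s a * (phi s a \<bullet> x) \<partial>A)) \<partial>M)"
      by (simp only: integral_mult_right_zero mult.left_commute)
    also have "\<dots> = K j * Fe i" unfolding Fe_def by (rule integral_mult_right_zero)
    finally show ?thesis .
  qed
  have Bf0: "0 \<le> Bf" using Bf[of undefined undefined] norm_ge_zero order_trans by blast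
  have feat: "feat_exp M A q pol xi0 phi i \<bullet> x = Fe i" for i
  proof -
    let ?d = "sdist M A q pol xi0 i"
    define Phi where "Phi s = (\<integral>a. (?d s * pol s a) *\<^sub>R phi s a \<partial>A)" for s
    have iA: "integrable A (\<lambda>a. (?d s * pol s a) *\<^sub>R phi s a)" for s
    proof (rule int_scale_bdd[OF _ _ Bf])
      show "integrable A (\<lambda>a. ?d s * pol s a)" using pol_dens by simp
      show "phi s \<in> borel_measurable A"
        using measurable_compose[OF measurable_Pair[OF measurable_const[of s] measurable_ident_sets[OF refl]] phi_meas] spM
        by (simp add: comp_def)
    qed
    have Phim: "Phi \<in> borel_measurable M" unfolding Phi_def by measurable
    have Phib: "norm (Phi s) \<le> Bf * ?d s" for s
    proof -
      have "norm (Phi s) \<le> (\<integral>a. norm ((?d s * pol s a) *\<^sub>R phi s a) \<partial>A)"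
        unfolding Phi_def by (rule integral_norm_bound)
      also have "\<dots> \<le> (\<integral>a. Bf * (?d s * pol s a) \<partial>A)"
      proof (rule integral_mono)
        show "integrable A (\<lambda>a. norm ((?d s * pol s a) *\<^sub>R phi s a))" using iA[of s] by (rule integrable_norm)
        show "integrable A (\<lambda>a. Bf * (?d s * pol s a))" using pol_dens by simp
        fix a show "norm ((?d s * pol s a) *\<^sub>R phi s a) \<le> Bf * (?d s * pol s a)"
          using Bf[of s a] T.dnn[of i s] pol_dens
          by (simp add: abs_mult mult.commute mult_right_mono)
      qed
      also have "\<dots> = Bf * ?d s" using pol_dens by simp
      finally show ?thesis .
    qed
    have iM: "integrable M Phi"
    proof (rule Bochner_Integration.integrable_bound[where f="\<lambda>s. Bf * ?d s"])
      show "integrable M (\<lambda>s. Bf * ?d s)" using T.di by simp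
      show "AE s in M. norm (Phi s) \<le> norm (Bf * ?d s)"
        using Phib Bf0 T.dnn by (auto intro!: AE_I2 simp: abs_mult)
    qed (rule Phim)
    have inner: "Phi s \<bullet> x = ?d s * (\<integral>a. pol s a * (phi s a \<bullet> x) \<partial>A)" for s
    proof -
      have "Phi s \<bullet> x = (\<integral>a. ((?d s * pol s a) *\<^sub>R phi s a) \<bullet> x \<partial>A)"
        unfolding Phi_def by (rule integral_inner_left[symmetric]) (rule iA)
      also have "\<dots> = ?d s * (\<integral>a. pol s a * (phi s a \<bullet> x) \<partial>A)" by (simp add: mult.assoc)
      finally show ?thesis .
    qed
    have "feat_exp M A q pol xi0 phi i \<bullet> x = (\<integral>s. Phi s \<partial>M) \<bullet> x"
      unfolding feat_exp_def Phi_def ..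
    also have "\<dots> = (\<integral>s. Phi s \<bullet> x \<partial>M)" by (rule integral_inner_left[symmetric]) (rule iM)
    also have "\<dots> = Fe i" unfolding inner Fe_def ..
    finally show ?thesis .
  qed
  have lhs: "pol_value M A p r pol xi0 H - pol_value M A q r pol xi0 H = (\<Sum>i<Suc H. K (H - i) * Fe i)"
    unfolding diff Tterm ..
  have K0: "K 0 = 0" by (simp add: K_def)
  have rhs: "1/2 * pov * plo * ((\<Sum>h<H. real (H - h) *\<^sub>R feat_exp M A q pol xi0 phi h) \<bullet> x)
      = (\<Sum>h<H. (1/2 * pov * plo) * (real (H - h) * Fe h))"
    by (simp add: inner_sum_left feat sum_distrib_left)
  have "(\<Sum>h<H. (1/2 * pov * plo) * (real (H - h) * Fe h)) \<le> (\<Sum>h<H. K (H - h) * Fe h)"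
  proof (rule sum_mono)
    fix h assume "h \<in> {..<H}"
    have "real (H - h) * (pov * plo / 2) \<le> K (H - h)" by (rule Kb) simp
    then have "real (H - h) * (pov * plo / 2) * Fe h \<le> K (H - h) * Fe h" by (rule mult_right_mono[OF _ Fe_nn])
    then show "(1/2 * pov * plo) * (real (H - h) * Fe h) \<le> K (H - h) * Fe h" by (simp add: algebra_simps)
  qed
  also have "\<dots> = (\<Sum>i<Suc H. K (H - i) * Fe i)" by (simp add: K0)
  finally show ?thesis
    unfolding q_def[symmetric] pov_def[symmetric] plo_def[symmetric] lhs rhs .
qed

end
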